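(* Let $(G,r)$ be a symmetric group, $r(a,b)=({}^ab,a^b)$, which is not the trivial solution, and let $(G,+,\cdot)$ be its associated left brace. The following are equivalent: (1) $(G,r)$ is a multipermutation solution of level $2$; (2) $G$ acts upon itself from the left as automorphisms: ${}^a(bc)=({}^ab)({}^ac)$ for all $a,b,c\in G$; (3) at least one (equivalently, each) of the following identities holds for all $a,b\in G$: (i) $\mathcal{L}_{{}^ba}=\mathcal{L}_a$; (ii) $\mathcal{L}_{a^b}=\mathcal{L}_a$; (iii) $\mathcal{R}_{{}^ba}=\mathcal{R}_a$; (iv) $\mathcal{R}_{a^b}=\mathcal{R}_a$. Moreover, each of these conditions implies that $(G,r)$ satisfies lri and the cyclic conditions, and that the brace satisfies Raut.
   Context: A symmetric group is $(G,r)$, $G$ a group, $r(u,v)=({}^uv,u^v)$ an involutive bijection of $G\times G$ with ${}^a1=1,{}^1u=u,1^u=1,a^1=a$, ${}^{ab}u={}^a({}^bu)$, $a^{uv}=(a^u)^v$, ${}^a(uv)=({}^au)({}^{a^u}v)$, $(ab)^u=(a^{{}^bu})(b^u)$, $uv=({}^uv)(u^v)$; it is a non-degenerate involutive set-theoretic solution of the Yang–Baxter equation. $\mathcal{L}_a(b)={}^ab$, $\mathcal{R}_a(b)=b^a$. The trivial solution means $r(a,b)=(b,a)$. The associated left brace has $a+b:=a({}^{a^{-1}}b)$. lri: $({}^ab)^a=b={}^a(b^a)$ for all $a,b$. Cyclic conditions: ${}^{(b^a)}a={}^ba$, $a^{({}^ab)}=a^b$, ${}^{({}^ab)}a={}^ba$,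 $a^{(b^a)}=a^b$ for all $a,b$. Raut: $(a+b)^c=a^c+b^c$. Retraction: classes of $a\sim b$ iff $\mathcal{L}_a=\mathcal{L}_b$ with induced map; $\mathrm{mpl}=m$ iff $m$ is minimal such that the $m$-fold iterated retraction has one element. *)

theory Defs
  imports "HOL-Algebra.Group"
begin

text \<open>A symmetric group (G,r) with r(u,v) = (L u v, R u v), where L u v is the left action
  of u on v and R u v is u acted upon from the right by v.\<close>

definition symmetric_group ::
  "('a, 'b) monoid_scheme \<Rightarrow> ('a \<Rightarrow> 'a \<Rightarrow> 'a) \<Rightarrow> ('a \<Rightarrow> 'a \<Rightarrow> 'a) \<Rightarrow> bool" where
  "symmetric_group G L R \<longleftrightarrow>
     group G \<and>
     (\<forall>u\<in>carrier G. \<forall>v\<in>carrier G. L u v \<in> carrier G \<and> R u v \<in> carrier G) \<and>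
     bij_betw (\<lambda>(u, v). (L u v, R u v)) (carrier G \<times> carrier G) (carrier G \<times> carrier G) \<and>
     (\<forall>u\<in>carrier G. \<forall>v\<in>carrier G. L (L u v) (R u v) = u \<and> R (L u v) (R u v) = v) \<and>
     (\<forall>a\<in>carrier G. L a \<one>\<^bsub>G\<^esub> = \<one>\<^bsub>G\<^esub> \<and> R a \<one>\<^bsub>G\<^esub> = a) \<and>
     (\<forall>u\<in>carrier G. L \<one>\<^bsub>G\<^esub> u = u \<and> R \<one>\<^bsub>G\<^esub> u = \<one>\<^bsub>G\<^esub>) \<and>
     (\<forall>a\<in>carrier G. \<forall>b\<in>carrier G. \<forall>u\<in>carrier G.
        L (a \<otimes>\<^bsub>G\<^esub> b) u = L a (L b u) \<and>
        R (a \<otimes>\<^bsub>G\<^esub> b) u = R a (L b u) \<otimes>\<^bsub>G\<^esub> R b u) \<and>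
     (\<forall>a\<in>carrier G. \<forall>u\<in>carrier G. \<forall>v\<in>carrier G.
        R a (u \<otimes>\<^bsub>G\<^esub> v) = R (R a u) v \<and>
        L a (u \<otimes>\<^bsub>G\<^esub> v) = L a u \<otimes>\<^bsub>G\<^esub> L (R a u) v) \<and>
     (\<forall>u\<in>carrier G. \<forall>v\<in>carrier G. u \<otimes>\<^bsub>G\<^esub> v = L u v \<otimes>\<^bsub>G\<^esub> R u v)"

definition trivial_solution :: "'a set \<Rightarrow> ('a \<Rightarrow> 'a \<Rightarrow> 'a) \<Rightarrow> ('a \<Rightarrow> 'a \<Rightarrow> 'a) \<Rightarrow> bool" where
  "trivial_solution X L R \<longleftrightarrow> (\<forall>a\<in>X. \<forall>b\<in>X. L a b = b \<and> R a b = a)"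

definition brace_plus :: "('a, 'b) monoid_scheme \<Rightarrow> ('a \<Rightarrow> 'a \<Rightarrow> 'a) \<Rightarrow> 'a \<Rightarrow> 'a \<Rightarrow> 'a" where
  "brace_plus G L a b = a \<otimes>\<^bsub>G\<^esub> L (inv\<^bsub>G\<^esub> a) b"

definition ret_rel :: "'a set \<Rightarrow> ('a \<Rightarrow> 'a \<Rightarrow> 'a) \<Rightarrow> ('a \<times> 'a) set" where
  "ret_rel X L = {(a, b). a \<in> X \<and> b \<in> X \<and> (\<forall>c\<in>X. L a c = L b c)}"

definition ret_carrier :: "'a set \<Rightarrow> ('a \<Rightarrow> 'a \<Rightarrow> 'a) \<Rightarrow> 'a set set" where
  "ret_carrier X L = X // ret_rel X L"

definition ret_lact :: "'a set \<Rightarrow> ('a \<Rightarrow> 'a \<Rightarrow> 'a) \<Rightarrow> 'a set \<Rightarrow> 'a set \<Rightarrow> 'a set" where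
  "ret_lact X L A B = ret_rel X L `` {L (SOME a. a \<in> A) (SOME b. b \<in> B)}"

definition ret_ract :: "'a set \<Rightarrow> ('a \<Rightarrow> 'a \<Rightarrow> 'a) \<Rightarrow> ('a \<Rightarrow> 'a \<Rightarrow> 'a) \<Rightarrow> 'a set \<Rightarrow> 'a set \<Rightarrow> 'a set" where
  "ret_ract X L R A B = ret_rel X L `` {R (SOME a. a \<in> A) (SOME b. b \<in> B)}"

text \<open>mpl = 2: the 2-fold iterated retraction has one element, while the 1-fold and 0-fold
  ones do not.  (The equivalence relation of the second retraction depends only on the
  induced left action of the first retraction.)\<close>
definition mpl_2 :: "'a set \<Rightarrow> ('a \<Rightarrow> 'a \<Rightarrow> 'a) \<Rightarrow> ('a \<Rightarrow> 'a \<Rightarrow> 'a) \<Rightarrow> bool" where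
  "mpl_2 X L R \<longleftrightarrow>
     card (ret_carrier (ret_carrier X L) (ret_lact X L)) = 1 \<and>
     card (ret_carrier X L) \<noteq> 1 \<and> card X \<noteq> 1"

end

theory Submission
  imports Defs
begin

lemma quot_full: "x \<in> A \<Longrightarrow> A // (A \<times> A) = {A}"
  unfolding quotient_def by auto

locale symgrp =
  fixes G :: "('a, 'b) monoid_scheme" (structure) and L R :: "'a \<Rightarrow> 'a \<Rightarrow> 'a"
  assumes sg: "symmetric_group G L R"
begin

lemma grp: "group G" using sg unfolding symmetric_group_def by blast

sublocale group G by (rule grp)

lemma closL[simp]: "u \<in> carrier G \<Longrightarrow> v \<in> carrier G \<Longrightarrow> L u v \<in> carrier G"
  using sg unfolding symmetric_group_def by blast
lemma closR[simp]: "u \<in> carrier G \<Longrightarrow> v \<in> carrier G \<Longrightarrow> R u v \<in> carrier G"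
  using sg unfolding symmetric_group_def by blast
lemma inv1: "u \<in> carrier G \<Longrightarrow> v \<in> carrier G \<Longrightarrow> L (L u v) (R u v) = u"
  using sg unfolding symmetric_group_def by blast
lemma inv2: "u \<in> carrier G \<Longrightarrow> v \<in> carrier G \<Longrightarrow> R (L u v) (R u v) = v"
  using sg unfolding symmetric_group_def by blast
lemma L1[simp]: "a \<in> carrier G \<Longrightarrow> L a \<one> = \<one>"
  using sg unfolding symmetric_group_def by blast
lemma R1[simp]: "a \<in> carrier G \<Longrightarrow> R a \<one> = a"
  using sg unfolding symmetric_group_def by blast
lemma L1'[simp]: "a \<in> carrier G \<Longrightarrow> L \<one> a = a"
  using sg unfolding symmetric_group_def by blast
lemma R1'[simp]: "a \<in> carrier G \<Longrightarrow> R \<one> a = \<one>"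
  using sg unfolding symmetric_group_def by blast
lemma Lmult: "a \<in> carrier G \<Longrightarrow> b \<in> carrier G \<Longrightarrow> u \<in> carrier G \<Longrightarrow> L (a \<otimes> b) u = L a (L b u)"
  using sg unfolding symmetric_group_def by blast
lemma Rmult: "a \<in> carrier G \<Longrightarrow> u \<in> carrier G \<Longrightarrow> v \<in> carrier G \<Longrightarrow> R a (u \<otimes> v) = R (R a u) v"
  using sg unfolding symmetric_group_def by blast
lemma Ldist: "a \<in> carrier G \<Longrightarrow> u \<in> carrier G \<Longrightarrow> v \<in> carrier G \<Longrightarrow> L a (u \<otimes> v) = L a u \<otimes> L (R a u) v"
  using sg unfolding symmetric_group_def by blast
lemma fact: "u \<in> carrier G \<Longrightarrow> v \<in> carrier G \<Longrightarrow> u \<otimes> v = L u v \<otimes> R u v"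
  using sg unfolding symmetric_group_def by blast

lemma Linv_l: "a \<in> carrier G \<Longrightarrow> u \<in> carrier G \<Longrightarrow> L (inv a) (L a u) = u"
  by (metis Lmult L1' inv_closed l_inv)
lemma Linv_r: "a \<in> carrier G \<Longrightarrow> u \<in> carrier G \<Longrightarrow> L a (L (inv a) u) = u"
  by (metis Lmult L1' inv_closed r_inv)
lemma Rinv_l: "a \<in> carrier G \<Longrightarrow> u \<in> carrier G \<Longrightarrow> R (R u a) (inv a) = u"
  by (metis Rmult R1 inv_closed r_inv)
lemma Rinv_r: "a \<in> carrier G \<Longrightarrow> u \<in> carrier G \<Longrightarrow> R (R u (inv a)) a = u"
  by (metis Rmult R1 inv_closed l_inv)

definition "Q1 \<longleftrightarrow> (\<forall>a\<in>carrier G. \<forall>b\<in>carrier G. \<forall>x\<in>carrier G. L (L b a) x = L a x)"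
definition "Q2 \<longleftrightarrow> (\<forall>a\<in>carrier G. \<forall>b\<in>carrier G. \<forall>x\<in>carrier G. L (R a b) x = L a x)"
definition "Q3 \<longleftrightarrow> (\<forall>a\<in>carrier G. \<forall>b\<in>carrier G. \<forall>x\<in>carrier G. R x (L b a) = R x a)"
definition "Q4 \<longleftrightarrow> (\<forall>a\<in>carrier G. \<forall>b\<in>carrier G. \<forall>x\<in>carrier G. R x (R a b) = R x a)"
definition "QA \<longleftrightarrow> (\<forall>a\<in>carrier G. \<forall>b\<in>carrier G. \<forall>c\<in>carrier G. L a (b \<otimes> c) = L a b \<otimes> L a c)"

lemma i_ii: "Q1 \<Longrightarrow> Q2"
  unfolding Q1_def Q2_def
proof (intro ballI)
  fix a b x assume P: "\<forall>a\<in>carrier G. \<forall>b\<in>carrier G. \<forall>x\<in>carrier G. L (L b a) x = L a x"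
    and ab: "a \<in> carrier G" "b \<in> carrier G" "x \<in> carrier G"
  have "L a x = L (L (L a b) (R a b)) x" using inv1 ab by simp
  also have "\<dots> = L (R a b) x" using P ab by simp
  finally show "L (R a b) x = L a x" by simp
qed

lemma ii_i: "Q2 \<Longrightarrow> Q1"
  unfolding Q1_def Q2_def
proof (intro ballI)
  fix a b x assume P: "\<forall>a\<in>carrier G. \<forall>b\<in>carrier G. \<forall>x\<in>carrier G. L (R a b) x = L a x"
    and ab: "a \<in> carrier G" "b \<in> carrier G" "x \<in> carrier G"
  have "L a x = L (R (L b a) (R b a)) x" using inv2 ab by simp
  also have "\<dots> = L (L b a) x" using P ab by simp
  finally show "L (L b a) x = L a x" by simp
qed

lemma iii_iv: "Q3 \<Longrightarrow> Q4"
  unfolding Q3_def Q4_def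
proof (intro ballI)
  fix a b x assume P: "\<forall>a\<in>carrier G. \<forall>b\<in>carrier G. \<forall>x\<in>carrier G. R x (L b a) = R x a"
    and ab: "a \<in> carrier G" "b \<in> carrier G" "x \<in> carrier G"
  have "R x a = R x (L (L a b) (R a b))" using inv1 ab by simp
  also have "\<dots> = R x (R a b)" using P ab by simp
  finally show "R x (R a b) = R x a" by simp
qed

lemma iv_iii: "Q4 \<Longrightarrow> Q3"
  unfolding Q3_def Q4_def
proof (intro ballI)
  fix a b x assume P: "\<forall>a\<in>carrier G. \<forall>b\<in>carrier G. \<forall>x\<in>carrier G. R x (R a b) = R x a"
    and ab: "a \<in> carrier G" "b \<in> carrier G" "x \<in> carrier G"
  have "R x a = R x (R (L b a) (R b a))" using inv2 ab by simp
  also have "\<dots> = R x (L b a)" using P ab by simp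
  finally show "R x (L b a) = R x a" by simp
qed

lemma ii_A: "Q2 \<Longrightarrow> QA"
  unfolding Q2_def QA_def by (simp add: Ldist)

lemma A_ii: "QA \<Longrightarrow> Q2"
  unfolding Q2_def QA_def
proof (intro ballI)
  fix a b x assume P: "\<forall>a\<in>carrier G. \<forall>b\<in>carrier G. \<forall>c\<in>carrier G. L a (b \<otimes> c) = L a b \<otimes> L a c"
    and ab: "a \<in> carrier G" "b \<in> carrier G" "x \<in> carrier G"
  have "L a b \<otimes> L (R a b) x = L a b \<otimes> L a x" using P ab Ldist by simp
  then show "L (R a b) x = L a x" using ab by simp
qed

lemma Linv_cong: assumes "y \<in> carrier G" "y' \<in> carrier G" "\<forall>w\<in>carrier G. L y w = L y' w" "z \<in> carrier G"
  shows "L (inv y) z = L (inv y') z"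
proof -
  have "L y' (L (inv y) z) = L y (L (inv y) z)" using assms by simp
  also have "\<dots> = z" using assms Linv_r by simp
  finally have "L y' (L (inv y) z) = z" .
  hence "L (inv y') z = L (inv y') (L y' (L (inv y) z))" by simp
  also have "\<dots> = L (inv y) z" using assms Linv_l by simp
  finally show ?thesis by simp
qed

lemma Rinv_cong: assumes "y \<in> carrier G" "y' \<in> carrier G" "\<forall>w\<in>carrier G. R w y = R w y'" "z \<in> carrier G"
  shows "R z (inv y) = R z (inv y')"
proof -
  have "R (R z (inv y)) y' = z" using assms Rinv_r by (metis inv_closed closR)
  hence "R z (inv y') = R (R (R z (inv y)) y') (inv y')" by simp
  also have "\<dots> = R z (inv y)" using assms Rinv_l by simp
  finally show ?thesis by simp
qed

lemma i_Rform: assumes "Q1" "x \<in> carrier G" "y \<in> carrier G" shows "R x y = L (inv y) x"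
proof -
  have "L (L x y) (R x y) = L y (R x y)" using assms unfolding Q1_def by simp
  hence "L y (R x y) = x" using assms inv1[of x y] by simp
  hence "L (inv y) x = L (inv y) (L y (R x y))" by simp
  also have "\<dots> = R x y" using assms Linv_l by simp
  finally show ?thesis by simp
qed

lemma i_iv: "Q1 \<Longrightarrow> Q4"
  unfolding Q4_def
proof (intro ballI)
  fix a b x assume P: Q1 and ab: "a \<in> carrier G" "b \<in> carrier G" "x \<in> carrier G"
  have ii: Q2 using P i_ii by blast
  have "R x (R a b) = L (inv (R a b)) x" using i_Rform P ab by simp
  also have "\<dots> = L (inv a) x" using Linv_cong[of "R a b" a x] ii ab unfolding Q2_def by simp
  also have "\<dots> = R x a" using i_Rform P ab by simp
  finally show "R x (R a b) = R x a" .
qed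

lemma iv_Lform: assumes "Q4" "x \<in> carrier G" "y \<in> carrier G" shows "L x y = R y (inv x)"
proof -
  have "R (L x y) x = y" using assms inv2[of x y] unfolding Q4_def by (metis closL)
  hence "R y (inv x) = R (R (L x y) x) (inv x)" by simp
  also have "\<dots> = L x y" using assms Rinv_l by simp
  finally show ?thesis by simp
qed

lemma iv_i: "Q4 \<Longrightarrow> Q1"
  unfolding Q1_def
proof (intro ballI)
  fix a b x assume P: Q4 and ab: "a \<in> carrier G" "b \<in> carrier G" "x \<in> carrier G"
  have iii: Q3 using P iv_iii by blast
  have "L (L b a) x = R x (inv (L b a))" using iv_Lform P ab by simp
  also have "\<dots> = R x (inv a)" using Rinv_cong[of "L b a" a x] iii ab unfolding Q3_def by simp
  also have "\<dots> = L a x" using iv_Lform P ab by simp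
  finally show "L (L b a) x = L a x" .
qed


lemma L_comm: assumes "Q1" "x \<in> carrier G" "y \<in> carrier G" "w \<in> carrier G"
  shows "L (x \<otimes> y) w = L (y \<otimes> x) w"
proof -
  have "L (x \<otimes> y) w = L (L x y \<otimes> R x y) w" using assms fact[of x y] by simp
  also have "\<dots> = L (L x y) (L (R x y) w)" using assms Lmult by simp
  also have "\<dots> = L y (L x w)" using assms i_ii unfolding Q1_def Q2_def by simp
  also have "\<dots> = L (y \<otimes> x) w" using assms Lmult by simp
  finally show ?thesis .
qed

lemma conseq: assumes Q: "Q1"
  shows "(\<forall>a\<in>carrier G. \<forall>b\<in>carrier G. R (L a b) a = b \<and> L a (R b a) = b)
        \<and> (\<forall>a\<in>carrier G. \<forall>b\<in>carrier G.
             L (R b a) a = L b a \<and> R a (L a b) = R a b \<and>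
             L (L a b) a = L b a \<and> R a (R b a) = R a b)
        \<and> (\<forall>a\<in>carrier G. \<forall>b\<in>carrier G. \<forall>c\<in>carrier G.
             R (brace_plus G L a b) c = brace_plus G L (R a c) (R b c))"
proof -
  have Q2: Q2 using Q i_ii by blast
  have Q4: Q4 using Q i_iv by blast
  have Q3: Q3 using Q4 iv_iii by blast
  have QA: QA using Q2 ii_A by blast
  have lri: "\<forall>a\<in>carrier G. \<forall>b\<in>carrier G. R (L a b) a = b \<and> L a (R b a) = b"
  proof (intro ballI conjI)
    fix a b assume ab: "a \<in> carrier G" "b \<in> carrier G"
    have "R (L a b) a = R (L a b) (R a b)" using Q4 ab unfolding Q4_def by simp
    thus "R (L a b) a = b" using inv2 ab by simp
    have "L a (R b a) = L (L b a) (R b a)" using Q ab unfolding Q1_def by simp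
    thus "L a (R b a) = b" using inv1 ab by simp
  qed
  have cyc: "\<forall>a\<in>carrier G. \<forall>b\<in>carrier G.
             L (R b a) a = L b a \<and> R a (L a b) = R a b \<and>
             L (L a b) a = L b a \<and> R a (R b a) = R a b"
    using Q Q2 Q3 Q4 unfolding Q1_def Q2_def Q3_def Q4_def by simp
  have raut: "\<forall>a\<in>carrier G. \<forall>b\<in>carrier G. \<forall>c\<in>carrier G.
             R (brace_plus G L a b) c = brace_plus G L (R a c) (R b c)"
  proof (intro ballI)
    fix a b c assume abc: "a \<in> carrier G" "b \<in> carrier G" "c \<in> carrier G"
    define c' where "c' = inv c"
    have c': "c' \<in> carrier G" using abc c'_def by simp
    have iv: "inv (L c' a) = L c' (inv a)"
    proof (rule inv_equality)
      have "L c' (inv a \<otimes> a) = L c' (inv a) \<otimes> L c' a" using QA abc c' unfolding QA_def by (meson inv_closed)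
      hence "L c' (inv a) \<otimes> L c' a = L c' (inv a \<otimes> a)" by simp
      thus "L c' (inv a) \<otimes> L c' a = \<one>" using abc c' by simp
    qed (use abc c' in simp_all)
    have "R (brace_plus G L a b) c = L c' (a \<otimes> L (inv a) b)"
      unfolding brace_plus_def using i_Rform[OF Q] abc c'_def by simp
    also have "\<dots> = L c' a \<otimes> L c' (L (inv a) b)" using QA abc c' unfolding QA_def by simp
    also have "\<dots> = L c' a \<otimes> L (c' \<otimes> inv a) b" using abc c' Lmult by simp
    also have "\<dots> = L c' a \<otimes> L (inv a \<otimes> c') b" using abc c' L_comm[OF Q, of c' "inv a" b] by simp
    also have "\<dots> = L c' a \<otimes> L (inv a) (L c' b)" using abc c' Lmult by simp
    also have "\<dots> = L c' a \<otimes> L (L c' (inv a)) (L c' b)" using abc c' Q unfolding Q1_def by simp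
    also have "\<dots> = brace_plus G L (R a c) (R b c)"
      unfolding brace_plus_def using i_Rform[OF Q] abc iv c'_def by simp
    finally show "R (brace_plus G L a b) c = brace_plus G L (R a c) (R b c)" .
  qed
  show ?thesis using lri cyc raut by blast
qed


abbreviation "rel \<equiv> ret_rel (carrier G) L"

lemma rel_iff: "(x, y) \<in> rel \<longleftrightarrow> x \<in> carrier G \<and> y \<in> carrier G \<and> (\<forall>c\<in>carrier G. L x c = L y c)"
  by (simp add: ret_rel_def)

lemma equiv_rel: "equiv (carrier G) rel"
  unfolding equiv_def refl_on_def sym_def trans_def ret_rel_def by auto

lemma ker_conj: assumes "s \<in> carrier G" "\<forall>z\<in>carrier G. L s z = z" "x \<in> carrier G"
  shows "L x s = x \<otimes> s \<otimes> inv x"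
proof -
  define s2 where "s2 = x \<otimes> s \<otimes> inv x"
  have s2: "s2 \<in> carrier G" using assms s2_def by simp
  have k: "\<forall>z\<in>carrier G. L s2 z = z"
  proof
    fix z assume z: "z \<in> carrier G"
    have "L s2 z = L x (L s (L (inv x) z))" using assms z s2_def Lmult by simp
    also have "\<dots> = z" using assms z Linv_r by simp
    finally show "L s2 z = z" .
  qed
  have "s2 \<otimes> x = L s2 x \<otimes> R s2 x" using fact[of s2 x] s2 assms by simp
  hence e: "s2 \<otimes> x = x \<otimes> R s2 x" using k assms by simp
  have "R s2 x = inv x \<otimes> (s2 \<otimes> x)" using e assms s2 by (simp add: m_assoc[symmetric])
  also have "\<dots> = s" using assms s2_def by (simp add: m_assoc[symmetric]) (simp add: m_assoc)
  finally have "R s2 x = s" .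
  moreover have "L (L s2 x) (R s2 x) = s2" using inv1 s2 assms by simp
  ultimately show ?thesis using k s2 assms s2_def by simp
qed

lemma wd: assumes "(c, c') \<in> rel" "a \<in> carrier G" shows "(L a c, L a c') \<in> rel"
proof -
  have c: "c \<in> carrier G" "c' \<in> carrier G" and eq: "\<forall>z\<in>carrier G. L c z = L c' z"
    using assms rel_iff by auto
  define s where "s = inv c \<otimes> c'"
  have s: "s \<in> carrier G" using c s_def by simp
  have ks: "\<forall>z\<in>carrier G. L s z = z"
  proof
    fix z assume z: "z \<in> carrier G"
    have "L s z = L (inv c) (L c' z)" using c z s_def Lmult by simp
    also have "\<dots> = L (inv c) (L c z)" using eq z by simp
    also have "\<dots> = z" using c z Linv_l by simp
    finally show "L s z = z" .
  qed
  have cc: "c' = c \<otimes> s" using c s_def by (simp add: m_assoc[symmetric])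
  define x where "x = R a c"
  have x: "x \<in> carrier G" using x_def assms c by simp
  have t: "\<forall>z\<in>carrier G. L (L x s) z = z"
  proof
    fix z assume z: "z \<in> carrier G"
    have "L (L x s) z = L x (L s (L (inv x) z))" using ker_conj[OF s ks x] x s z Lmult by simp
    also have "\<dots> = z" using ks x z Linv_r by simp
    finally show "L (L x s) z = z" .
  qed
  have "L a c' = L a c \<otimes> L x s" using cc Ldist x_def assms c s by simp
  hence "\<forall>z\<in>carrier G. L (L a c') z = L (L a c) z" using t Lmult assms c x s by simp
  thus ?thesis using rel_iff assms c by simp
qed

lemma rep: assumes "A \<in> carrier G // rel" shows "(SOME a. a \<in> A) \<in> A" "(SOME a. a \<in> A) \<in> carrier G"
  "(x, SOME a. a \<in> A) \<in> rel \<longleftrightarrow> x \<in> A"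
proof -
  obtain y where y: "A = rel `` {y}" "y \<in> carrier G" using assms by (rule quotientE)
  have "y \<in> A" using y rel_iff by simp
  thus 1: "(SOME a. a \<in> A) \<in> A" by (rule someI)
  thus "(SOME a. a \<in> A) \<in> carrier G" using y rel_iff by auto
  show "(x, SOME a. a \<in> A) \<in> rel \<longleftrightarrow> x \<in> A"
    using 1 y equiv_rel unfolding equiv_def sym_def trans_def by blast
qed

lemma mpl_i: assumes "mpl_2 (carrier G) L R" shows Q1
  unfolding Q1_def
proof (intro ballI)
  let ?X = "carrier G // rel"
  let ?rel' = "ret_rel ?X (ret_lact (carrier G) L)"
  have "card (?X // ?rel') = 1" using assms unfolding mpl_2_def ret_carrier_def by simp
  then obtain Q where Q: "?X // ?rel' = {Q}" by (rule card_1_singletonE)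
  fix c a x assume ca: "c \<in> carrier G" "a \<in> carrier G" "x \<in> carrier G"
  let ?A = "rel `` {a}" and ?O = "rel `` {\<one>}" and ?C = "rel `` {c}"
  have XA: "?A \<in> ?X" "?O \<in> ?X" "?C \<in> ?X" using ca by (auto intro: quotientI)
  have "?rel' `` {?A} \<in> ?X // ?rel'" "?rel' `` {?O} \<in> ?X // ?rel'" using XA by (auto intro: quotientI)
  hence qq: "?rel' `` {?A} = ?rel' `` {?O}" using Q by simp
  have "(?O, ?O) \<in> ?rel'" using XA unfolding ret_rel_def by simp
  hence "(?A, ?O) \<in> ?rel'" using qq by blast
  hence "ret_lact (carrier G) L ?A ?C = ret_lact (carrier G) L ?O ?C" using XA unfolding ret_rel_def by simp
  hence eqc: "rel `` {L (SOME u. u \<in> ?A) (SOME u. u \<in> ?C)} = rel `` {L (SOME u. u \<in> ?O) (SOME u. u \<in> ?C)}"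
    unfolding ret_lact_def by simp
  define a' where "a' = (SOME u. u \<in> ?A)"
  define o' where "o' = (SOME u. u \<in> ?O)"
  define c' where "c' = (SOME u. u \<in> ?C)"
  have a': "(a, a') \<in> rel" "a' \<in> carrier G" using rep[OF XA(1)] a'_def ca rel_iff by auto
  have o': "(\<one>, o') \<in> rel" "o' \<in> carrier G" using rep[OF XA(2)] o'_def rel_iff by auto
  have c': "(c, c') \<in> rel" "c' \<in> carrier G" using rep[OF XA(3)] c'_def ca rel_iff by auto
  have "L a' c' = L a c'" using a' c' rel_iff by auto
  moreover have "L o' c' = c'" using o' c' rel_iff by force
  ultimately have "rel `` {L a c'} = rel `` {c'}" using eqc a'_def o'_def c'_def by simp
  hence r1: "(L a c', c') \<in> rel" using eq_equiv_class_iff[OF equiv_rel] ca c' by simp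
  have r2: "(L a c, L a c') \<in> rel" using wd c' ca by simp
  have "(L a c, c) \<in> rel" using r1 r2 c' equiv_rel unfolding equiv_def sym_def trans_def by blast
  thus "L (L a c) x = L c x" using ca rel_iff by simp
qed

lemma i_mpl: assumes Q: Q1 and nt: "\<not> trivial_solution (carrier G) L R"
  shows "mpl_2 (carrier G) L R"
proof -
  let ?X = "carrier G // rel"
  let ?rel' = "ret_rel ?X (ret_lact (carrier G) L)"
  have XO: "rel `` {\<one>} \<in> ?X" by (auto intro: quotientI)
  have c1: "card (carrier G) \<noteq> 1"
  proof
    assume "card (carrier G) = 1"
    then obtain y where y: "carrier G = {y}" by (rule card_1_singletonE)
    hence "carrier G = {\<one>}" by auto
    hence "trivial_solution (carrier G) L R" unfolding trivial_solution_def by simp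
    thus False using nt by simp
  qed
  have c2: "card ?X \<noteq> 1"
  proof
    assume "card ?X = 1"
    then obtain Q where Qd: "?X = {Q}" by (rule card_1_singletonE)
    have all: "(a, \<one>) \<in> rel" if a: "a \<in> carrier G" for a
    proof -
      have "rel `` {a} \<in> ?X" using a by (auto intro: quotientI)
      hence "rel `` {a} = rel `` {\<one>}" using XO Qd by simp
      thus ?thesis using eq_equiv_class_iff[OF equiv_rel] a by simp
    qed
    have "trivial_solution (carrier G) L R" unfolding trivial_solution_def
    proof (intro ballI conjI)
      fix a b assume ab: "a \<in> carrier G" "b \<in> carrier G"
      show lab: "L a b = b" using all[OF ab(1)] ab rel_iff by simp
      have "L (L a b) (R a b) = R a b" using all[of "L a b"] ab rel_iff by simp
      thus "R a b = a" using inv1 ab by simp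
    qed
    thus False using nt by simp
  qed
  have key: "ret_lact (carrier G) L A C = rel `` {SOME c. c \<in> C}" if AC: "A \<in> ?X" "C \<in> ?X" for A C
  proof -
    have a': "(SOME a. a \<in> A) \<in> carrier G" and c': "(SOME a. a \<in> C) \<in> carrier G"
      using rep AC by auto
    have "(L (SOME a. a \<in> A) (SOME a. a \<in> C), SOME a. a \<in> C) \<in> rel"
      using Q a' c' rel_iff unfolding Q1_def by simp
    thus ?thesis unfolding ret_lact_def using eq_equiv_class_iff[OF equiv_rel] a' c' by simp
  qed
  have full: "?rel' = ?X \<times> ?X" unfolding ret_rel_def[of ?X "ret_lact (carrier G) L"] using key by auto
  have "?X // ?rel' = ?X // (?X \<times> ?X)" using full by simp
  also have "\<dots> = {?X}" by (rule quot_full[OF XO])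
  finally have "?X // ?rel' = {?X}" .
  thus ?thesis unfolding mpl_2_def ret_carrier_def using c1 c2 by simp
qed

end

theorem mainTheorem14:
  fixes G :: "('a, 'b) monoid_scheme" and L R :: "'a \<Rightarrow> 'a \<Rightarrow> 'a"
  assumes sg: "symmetric_group G L R"
    and nontriv: "\<not> trivial_solution (carrier G) L R"
  shows
    "(mpl_2 (carrier G) L R \<longleftrightarrow>
        (\<forall>a\<in>carrier G. \<forall>b\<in>carrier G. \<forall>c\<in>carrier G.
           L a (b \<otimes>\<^bsub>G\<^esub> c) = L a b \<otimes>\<^bsub>G\<^esub> L a c))
     \<and> (mpl_2 (carrier G) L R \<longleftrightarrow>
        (\<forall>a\<in>carrier G. \<forall>b\<in>carrier G. \<forall>x\<in>carrier G. L (L b a) x = L a x))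
     \<and> (mpl_2 (carrier G) L R \<longleftrightarrow>
        (\<forall>a\<in>carrier G. \<forall>b\<in>carrier G. \<forall>x\<in>carrier G. L (R a b) x = L a x))
     \<and> (mpl_2 (carrier G) L R \<longleftrightarrow>
        (\<forall>a\<in>carrier G. \<forall>b\<in>carrier G. \<forall>x\<in>carrier G. R x (L b a) = R x a))
     \<and> (mpl_2 (carrier G) L R \<longleftrightarrow>
        (\<forall>a\<in>carrier G. \<forall>b\<in>carrier G. \<forall>x\<in>carrier G. R x (R a b) = R x a))
     \<and> (mpl_2 (carrier G) L R \<longrightarrow>
          (\<forall>a\<in>carrier G. \<forall>b\<in>carrier G. R (L a b) a = b \<and> L a (R b a) = b)
        \<and> (\<forall>a\<in>carrier G. \<forall>b\<in>carrier G.
             L (R b a) a = L b a \<and> R a (L a b) = R a b \<and>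
             L (L a b) a = L b a \<and> R a (R b a) = R a b)
        \<and> (\<forall>a\<in>carrier G. \<forall>b\<in>carrier G. \<forall>c\<in>carrier G.
             R (brace_plus G L a b) c = brace_plus G L (R a c) (R b c)))"
proof -
  interpret symgrp G L R by (rule symgrp.intro[OF sg])
  have e1: "mpl_2 (carrier G) L R \<longleftrightarrow> Q1" using mpl_i i_mpl nontriv by blast
  have e2: "Q1 \<longleftrightarrow> Q2" using i_ii ii_i by blast
  have e3: "Q1 \<longleftrightarrow> Q4" using i_iv iv_i by blast
  have e4: "Q3 \<longleftrightarrow> Q4" using iii_iv iv_iii by blast
  have e5: "QA \<longleftrightarrow> Q2" using A_ii ii_A by blast
  show ?thesis
    apply (fold QA_def Q1_def Q2_def Q3_def Q4_def)
    using e1 e2 e3 e4 e5 conseq by blast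
qed

end
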